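(* Let $u$ be the solution of the Cauchy problem in the context. If $\sigma\ge m_0f_0+m_1f_1$, then \[ \partial_xu(x,t)\le\frac{2}{1-x+e^{-(\sigma-m_0f_0)t}}\,e^{-m_1f_1t} \] for all $x\in[0,1]$ and $t\ge0$.
   Context: Constants: $f_0>0$, $f_1\ge0$ with $\sigma=f_0-f_1>0$; $\lambda_0,\lambda_1\ge0$; $\gamma_0,\gamma_1\in(0,1]$; $m_0=\lambda_0\gamma_0$, $m_1=\lambda_1\gamma_1$. With $\mathcal{J}_0u(x,t)=u(x+\gamma_0(1-x),t)-u(x,t)$ and $\mathcal{J}_1u(x,t)=u(x-\gamma_1x,t)-u(x,t)$, $u$ is the unique (mild) solution, which is $C^\infty$ on $[0,1]\times[0,\infty)$, of \[ \partial_tu+\sigma(1-x)x\,\partial_xu=\lambda_0f_0\mathcal{J}_0u+\lambda_1f_1\mathcal{J}_1u\ (0\le x\le1,\ t>0),\quad u(x,0)=x. \] *)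

theory Defs
  imports "HOL-Analysis.Analysis"
begin

text \<open>Classical (C^1 up to the boundary) solution of the Cauchy problem
  u_t + sigma (1-x) x u_x = lam0 f0 J0 u + lam1 f1 J1 u on [0,1] x (0,oo), u(x,0)=x.
  ux and ut are the partial derivatives of u (one-sided at the boundary).\<close>
definition is_solution ::
  "real \<Rightarrow> real \<Rightarrow> real \<Rightarrow> real \<Rightarrow> real \<Rightarrow> real \<Rightarrow>
   (real \<Rightarrow> real \<Rightarrow> real) \<Rightarrow> (real \<Rightarrow> real \<Rightarrow> real) \<Rightarrow> (real \<Rightarrow> real \<Rightarrow> real) \<Rightarrow> bool"
  where
  "is_solution f0 f1 lam0 lam1 gam0 gam1 u ux ut \<longleftrightarrow>
     (\<forall>x\<in>{0..1}. \<forall>t\<in>{0..}.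
        ((\<lambda>y. u y t) has_real_derivative ux x t) (at x within {0..1}) \<and>
        ((\<lambda>s. u x s) has_real_derivative ut x t) (at t within {0..})) \<and>
     continuous_on ({0..1} \<times> {0..}) (\<lambda>(x,t). ux x t) \<and>
     continuous_on ({0..1} \<times> {0..}) (\<lambda>(x,t). ut x t) \<and>
     (\<forall>x\<in>{0..1}. \<forall>t>0.
        ut x t + (f0 - f1) * (1 - x) * x * ux x t =
          lam0 * f0 * (u (x + gam0 * (1 - x)) t - u x t)
        + lam1 * f1 * (u (x - gam1 * x) t - u x t)) \<and>
     (\<forall>x\<in>{0..1}. u x 0 = x)"

end

theory Submission
  imports Defs
begin


lemma partials_joint:
  fixes F Fx Ft :: "real \<Rightarrow> real \<Rightarrow> real"
  assumes dx: "\<forall>x\<in>{0..1}. \<forall>t\<in>{0..}. ((\<lambda>y. F y t) has_real_derivative Fx x t) (at x within {0..1})"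
    and dt: "\<forall>x\<in>{0..1}. \<forall>t\<in>{0..}. ((\<lambda>s. F x s) has_real_derivative Ft x t) (at t within {0..})"
    and cx: "continuous_on ({0..1} \<times> {0..}) (\<lambda>(x,t). Fx x t)"
    and t0x0: "(t0,x0) \<in> {0..} \<times> {0..1}"
  shows "((\<lambda>p. F (snd p) (fst p)) has_derivative (\<lambda>p. Ft x0 t0 * fst p + Fx x0 t0 * snd p)) (at (t0, x0) within {0..} \<times> {0..1})"
proof -
  have cx': "continuous_on ({0..} \<times> {0..1}) (\<lambda>(t,x). Fx x t)"
  proof -
    have "continuous_on ({0..} \<times> {0..1}) ((\<lambda>(x,t). Fx x t) \<circ> (\<lambda>(t,x). (x,t)))"
    proof (rule continuous_on_compose)
      show "continuous_on ({0..} \<times> {0..1}) (\<lambda>(t::real, x::real). (x, t))"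
        by (auto intro!: continuous_intros simp: case_prod_beta)
      have "(\<lambda>(t::real, x::real). (x, t)) ` ({0..} \<times> {0..1}) \<subseteq> {0..1} \<times> {0..}" by auto
      then show "continuous_on ((\<lambda>(t, x). (x, t)) ` ({0..} \<times> {0..1})) (\<lambda>(x, t). Fx x t)"
        using continuous_on_subset cx by blast
    qed
    then show ?thesis by (simp add: o_def case_prod_beta)
  qed
  have cb: "continuous_on ({0..} \<times> {0..1}) (\<lambda>(t,x). blinfun_mult_right (Fx x t))"
    using bounded_linear.continuous_on[OF bounded_linear_blinfun_mult_right cx']
    by (simp add: case_prod_beta)
  have P: "((\<lambda>(t,x). F x t) has_derivative (\<lambda>(ht,hx). Ft x0 t0 * ht + blinfun_apply (blinfun_mult_right (Fx x0 t0)) hx))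
            (at (t0, x0) within {0..} \<times> {0..1})" if "(t0,x0) \<in> {0..} \<times> {0..1}" for t0 x0
  proof (rule has_derivative_partialsI[where f="\<lambda>t x. F x t" and fy = "\<lambda>t x. blinfun_mult_right (Fx x t)"])
    show "((\<lambda>t. F x0 t) has_derivative (*) (Ft x0 t0)) (at t0 within {0..})"
      using dt that by (auto simp: has_field_derivative_def)
    show "\<And>t x. t \<in> {0..} \<Longrightarrow> x \<in> {0..1} \<Longrightarrow> ((\<lambda>x. F x t) has_derivative blinfun_apply (blinfun_mult_right (Fx x t))) (at x within {0..1})"
      using dx by (auto simp: has_field_derivative_def)
    show "continuous (at (t0, x0) within {0..} \<times> {0..1}) (\<lambda>(t, x). blinfun_mult_right (Fx x t))"
      using cb that continuous_on_eq_continuous_within by blast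
    show "x0 \<in> {0..1}" "convex {0..(1::real)}" using that by auto
  qed
  have P2: "((\<lambda>p. F (snd p) (fst p)) has_derivative (\<lambda>p. Ft x0 t0 * fst p + Fx x0 t0 * snd p)) (at (t0, x0) within {0..} \<times> {0..1})"
    if "(t0,x0) \<in> {0..} \<times> {0..1}" for t0 x0
    using P[OF that] by (simp add: split_beta')
  show ?thesis using P2[OF t0x0] .
qed

lemma joint_cont:
  fixes F Fx Ft :: "real \<Rightarrow> real \<Rightarrow> real"
  assumes dx: "\<forall>x\<in>{0..1}. \<forall>t\<in>{0..}. ((\<lambda>y. F y t) has_real_derivative Fx x t) (at x within {0..1})"
    and dt: "\<forall>x\<in>{0..1}. \<forall>t\<in>{0..}. ((\<lambda>s. F x s) has_real_derivative Ft x t) (at t within {0..})"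
    and cx: "continuous_on ({0..1} \<times> {0..}) (\<lambda>(x,t). Fx x t)"
  shows "continuous_on ({0..} \<times> {0..1}) (\<lambda>p. F (snd p) (fst p))"
proof -
  have "continuous (at p within {0..} \<times> {0..1}) (\<lambda>p. F (snd p) (fst p))" if "p \<in> {0..} \<times> {0..1}" for p
  proof -
    have pp: "(fst p, snd p) \<in> {0..} \<times> {0..1}" using that by simp
    show ?thesis using has_derivative_continuous[OF partials_joint[OF dx dt cx pp]] by simp
  qed
  then show ?thesis using continuous_on_eq_continuous_within by blast
qed

lemma chain_rule_curve:
  fixes F Fx Ft :: "real \<Rightarrow> real \<Rightarrow> real" and g :: "real \<Rightarrow> real"
  assumes dx: "\<forall>x\<in>{0..1}. \<forall>t\<in>{0..}. ((\<lambda>y. F y t) has_real_derivative Fx x t) (at x within {0..1})"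
    and dt: "\<forall>x\<in>{0..1}. \<forall>t\<in>{0..}. ((\<lambda>s. F x s) has_real_derivative Ft x t) (at t within {0..})"
    and cx: "continuous_on ({0..1} \<times> {0..}) (\<lambda>(x,t). Fx x t)"
    and g: "(g has_real_derivative g') (at s within {0..})"
    and gr: "\<And>s. s \<ge> 0 \<Longrightarrow> g s \<in> {0..1}" and s: "s \<ge> 0"
  shows "((\<lambda>s. F (g s) s) has_real_derivative (Fx (g s) s * g' + Ft (g s) s)) (at s within {0..})"
proof -
  note P2 = partials_joint[OF dx dt cx]
  have c: "((\<lambda>t. (t, g t)) has_derivative (\<lambda>h. (h, g' * h))) (at s within {0..})"
    using has_derivative_Pair[OF has_derivative_ident g[unfolded has_field_derivative_def]] by simp
  define G' where "G' = (\<lambda>q. (\<lambda>p. Ft (snd q) (fst q) * fst p + Fx (snd q) (fst q) * snd p))"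
  have "((\<lambda>x. (\<lambda>p. F (snd p) (fst p)) ((\<lambda>t. (t, g t)) x)) has_derivative (\<lambda>y. (G' ((\<lambda>t. (t,g t)) s)) ((\<lambda>h. (h, g'*h)) y))) (at s within {0..})"
    apply (rule has_derivative_in_compose2[where t="{0..} \<times> {0..1}", OF _ _ _ c])
    subgoal for x using P2[of "fst x" "snd x"] unfolding G'_def by (simp add: mem_Times_iff)
    subgoal
    proof
      fix q assume "q \<in> (\<lambda>t. (t, g t)) ` {0..}"
      then obtain t where "t \<in> {0..}" "q = (t, g t)" by blast
      then show "q \<in> {0..} \<times> {0..1}" using gr[of t] by simp
    qed
    subgoal using s by simp
    done
  then have "((\<lambda>s. F (g s) s) has_derivative (\<lambda>h. Ft (g s) s * h + Fx (g s) s * (g' * h))) (at s within {0..})"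
    by (simp add: G'_def)
  then show ?thesis
    unfolding has_field_derivative_def
    by (rule has_derivative_eq_rhs) (rule ext, simp add: algebra_simps)
qed



lemma frac_cross:
  fixes a b c d :: real
  assumes "b > 0" "d > 0" "a*d \<le> c*b"
  shows "a/b \<le> c/d"
proof -
  have "(a*d - c*b)/(b*d) \<le> 0" by (rule divide_nonpos_pos) (use assms in auto)
  then show ?thesis using frac_le_eq[of b d a c] assms by simp
qed

definition phi :: "real \<Rightarrow> real \<Rightarrow> real \<Rightarrow> real" where
  "phi sig r z = z * exp (sig*r) / (1 - z + z * exp (sig*r))"
definition psi :: "real \<Rightarrow> real \<Rightarrow> real \<Rightarrow> real" where
  "psi sig r x = x / (exp (sig*r) * (1 - x) + x)"

lemma phi_den_pos: fixes z sig r :: real shows "0 \<le> z \<Longrightarrow> z \<le> 1 \<Longrightarrow> 1 - z + z * exp (sig*r) > 0"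
proof -
  assume z: "0 \<le> z" "z \<le> 1"
  have "z * exp (sig*r) \<ge> 0" using z by (intro mult_nonneg_nonneg) auto
  show ?thesis
  proof (cases "z = 1")
    case True then show ?thesis by simp
  next
    case False then show ?thesis using z \<open>z * exp (sig*r) \<ge> 0\<close> by linarith
  qed
qed

lemma phi_range: "0 \<le> z \<Longrightarrow> z \<le> 1 \<Longrightarrow> 0 \<le> phi sig r z \<and> phi sig r z \<le> 1"
proof -
  assume z: "0 \<le> z" "z \<le> 1"
  have d: "1 - z + z * exp (sig*r) > 0" using phi_den_pos z by blast
  have n: "z * exp (sig*r) \<ge> 0" using z by (intro mult_nonneg_nonneg) auto
  have "phi sig r z \<ge> 0" unfolding phi_def using d n by (intro divide_nonneg_pos) auto
  moreover have "phi sig r z \<le> 1" unfolding phi_def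
    using d z by (subst divide_le_eq_1_pos) auto
  ultimately show ?thesis by blast
qed

lemma phi_mono: "0 \<le> z1 \<Longrightarrow> z1 \<le> z2 \<Longrightarrow> z2 \<le> 1 \<Longrightarrow> phi sig r z1 \<le> phi sig r z2"
proof -
  assume z: "0 \<le> z1" "z1 \<le> z2" "z2 \<le> 1"
  define e where "e = exp (sig*r)"
  have e: "e > 0" by (simp add: e_def)
  have d1: "1 - z1 + z1 * e > 0" and d2: "1 - z2 + z2 * e > 0"
    using phi_den_pos[of z1 sig r] phi_den_pos[of z2 sig r] z by (auto simp: e_def)
  have "z1 * e * (1 - z2 + z2 * e) \<le> z2 * e * (1 - z1 + z1 * e)"
  proof -
    have "z1 * e * (1 - z2 + z2 * e) - z2 * e * (1 - z1 + z1 * e) = e * (z1 - z2)"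
      by (simp add: algebra_simps)
    also have "\<dots> \<le> 0" using e z by (intro mult_nonneg_nonpos) auto
    finally show ?thesis by simp
  qed
  then have "z1 * e / (1 - z1 + z1 * e) \<le> z2 * e / (1 - z2 + z2 * e)"
    by (intro frac_cross d1 d2)
  then show ?thesis unfolding phi_def e_def .
qed

lemma phi_0: "phi sig 0 z = z"
  by (simp add: phi_def)

lemma phi_deriv:
  assumes "0 \<le> z" "z \<le> 1"
  shows "((\<lambda>r. phi sig r z) has_real_derivative sig * (1 - phi sig r z) * phi sig r z) (at r)"
proof -
  define e where "e = exp (sig*r)"
  have d: "1 - z + z * e > 0" using phi_den_pos assms by (simp add: e_def)
  have "((\<lambda>r. z * exp (sig*r) / (1 - z + z * exp (sig*r))) has_real_derivative
        ((z * (exp (sig*r) * sig)) * (1 - z + z * exp (sig*r)) - z * exp (sig*r) * (z * (exp (sig*r) * sig))) / (1 - z + z * exp (sig*r))^2) (at r)"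
    apply (rule DERIV_cong)
     apply (rule DERIV_divide)
       apply (rule DERIV_cmult)
       apply (rule DERIV_fun_exp)
       apply (rule DERIV_cmult_Id)
      apply (rule DERIV_add)
       apply (rule DERIV_const)
      apply (rule DERIV_cmult)
      apply (rule DERIV_fun_exp)
      apply (rule DERIV_cmult_Id)
    using d by (auto simp: e_def power2_eq_square)
  moreover have "((z * (exp (sig*r) * sig)) * (1 - z + z * exp (sig*r)) - z * exp (sig*r) * (z * (exp (sig*r) * sig))) / (1 - z + z * exp (sig*r))^2
      = sig * (1 - phi sig r z) * phi sig r z"
  proof -
    have "1 - phi sig r z = (1 - z) / (1 - z + z * e)"
      unfolding phi_def e_def[symmetric] using d by (simp add: field_simps)
    then have "sig * (1 - phi sig r z) * phi sig r z = sig * ((1 - z) / (1 - z + z * e)) * (z * e / (1 - z + z * e))"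
      unfolding phi_def e_def[symmetric] by simp
    also have "\<dots> = sig * (1 - z) * (z * e) / (1 - z + z * e)^2"
      by (simp add: power2_eq_square)
    finally have r: "sig * (1 - phi sig r z) * phi sig r z = sig * (1 - z) * (z * e) / (1 - z + z * e)^2" .
    have "(z * (e * sig)) * (1 - z + z * e) - z * e * (z * (e * sig)) = sig * (1 - z) * (z * e)"
      by (simp add: algebra_simps)
    then show ?thesis unfolding r e_def[symmetric] by simp
  qed
  ultimately show ?thesis unfolding phi_def by simp
qed

lemma psi_range: "0 \<le> x \<Longrightarrow> x \<le> 1 \<Longrightarrow> 0 \<le> psi sig r x \<and> psi sig r x \<le> 1"
proof -
  assume x: "0 \<le> x" "x \<le> 1"
  have a: "exp (sig*r) * (1 - x) \<ge> 0" using x by (intro mult_nonneg_nonneg) auto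
  show ?thesis
  proof (cases "x = 0")
    case True then show ?thesis by (simp add: psi_def)
  next
    case False
    then have d: "exp (sig*r) * (1 - x) + x > 0" using x a by linarith
    have "psi sig r x \<ge> 0" unfolding psi_def using d x by (intro divide_nonneg_pos) auto
    moreover have "psi sig r x \<le> 1" unfolding psi_def
      using d a by (subst divide_le_eq_1_pos) auto
    ultimately show ?thesis by blast
  qed
qed

lemma psi_mono: "0 \<le> x1 \<Longrightarrow> x1 \<le> x2 \<Longrightarrow> x2 \<le> 1 \<Longrightarrow> psi sig r x1 \<le> psi sig r x2"
proof -
  assume x: "0 \<le> x1" "x1 \<le> x2" "x2 \<le> 1"
  define e where "e = exp (sig*r)"
  have e: "e > 0" by (simp add: e_def)
  show ?thesis
  proof (cases "x1 = 0")
    case True then show ?thesis using psi_range[of x2 sig r] x by (simp add: psi_def)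
  next
    case False
    then have x1: "x1 > 0" using x by simp
    have a1: "e * (1 - x1) \<ge> 0" and a2: "e * (1 - x2) \<ge> 0" using x e by (auto intro!: mult_nonneg_nonneg)
    have d1: "e * (1 - x1) + x1 > 0" using x1 a1 by linarith
    have d2: "e * (1 - x2) + x2 > 0" using x1 x a2 by linarith
    have "x1 * (e * (1 - x2) + x2) \<le> x2 * (e * (1 - x1) + x1)"
    proof -
      have "x1 * (e * (1 - x2) + x2) - x2 * (e * (1 - x1) + x1) = e * (x1 - x2)"
        by (simp add: algebra_simps)
      also have "\<dots> \<le> 0" using e x by (intro mult_nonneg_nonpos) auto
      finally show ?thesis by simp
    qed
    then have "x1 / (e * (1 - x1) + x1) \<le> x2 / (e * (1 - x2) + x2)"
      by (intro frac_cross d1 d2)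
    then show ?thesis unfolding psi_def e_def .
  qed
qed

lemma phi_psi: "0 \<le> x \<Longrightarrow> x \<le> 1 \<Longrightarrow> phi sig r (psi sig r x) = x"
proof -
  assume x: "0 \<le> x" "x \<le> 1"
  define e where "e = exp (sig*r)"
  have e: "e > 0" by (simp add: e_def)
  show ?thesis
  proof (cases "x = 0")
    case True then show ?thesis by (simp add: phi_def psi_def)
  next
    case False
    then have x0: "x > 0" using x by simp
    have a: "e * (1 - x) \<ge> 0" using x e by (intro mult_nonneg_nonneg) auto
    define dd where "dd = e * (1 - x) + x"
    have dd: "dd > 0" using x0 a by (simp add: dd_def)
    have n0: "dd - x + x*e = e" by (simp add: dd_def algebra_simps)
    have "1 - x/dd + x/dd*e = (dd - x + x*e)/dd" using dd by (simp add: field_simps)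
    then have n: "1 - x/dd + x/dd*e = e/dd" using n0 by simp
    have "x/dd*e / (1 - x/dd + x/dd*e) = x" unfolding n using dd e by simp
    then show ?thesis unfolding phi_def psi_def e_def[symmetric] dd_def[symmetric] .
  qed
qed



lemma B_mono:
  fixes sig l0 g0 b a x y :: real
  assumes b: "b > 0" and sig: "sig \<ge> 0" and l0: "l0 \<ge> 0" and g0: "0 < g0" "g0 \<le> 1"
    and a: "a = sig - l0 * g0"
    and xy: "0 \<le> x" "x \<le> y" "y \<le> 1"
  defines "Bf \<equiv> \<lambda>x. a*b/(1-x+b) + sig*(1-x)*x/(1-x+b) + l0*(ln (1-(x+g0*(1-x))+b) - ln (1-x+b))"
  shows "Bf x \<le> Bf y"
proof (rule DERIV_nonneg_imp_nondecreasing[OF xy(2)])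
  fix z assume z: "x \<le> z" "z \<le> y"
  define q where "q = 1 - z + b"
  define q0 where "q0 = 1-(z+g0*(1-z))+b"
  have q: "q > 0" "q \<ge> b" using z xy b by (auto simp: q_def)
  have "q - q0 = g0*(1-z)" by (simp add: q_def q0_def algebra_simps)
  moreover have "g0*(1-z) \<ge> 0" using g0 z xy by (intro mult_nonneg_nonneg) auto
  moreover have "q0 - b = (1-g0)*(1-z)" by (simp add: q0_def algebra_simps)
  moreover have "(1-g0)*(1-z) \<ge> 0" using g0 z xy by (intro mult_nonneg_nonneg) auto
  ultimately have q0: "q0 \<le> q" "q0 \<ge> b" by linarith+
  then have q0p: "q0 > 0" using b by linarith
  have qq: "1 - z + b > 0" "1-(z+g0*(1-z))+b > 0" using q q0p by (simp_all add: q_def q0_def)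
  have "(Bf has_real_derivative (a*b/q^2 + sig*((1-2*z)*q + (1-z)*z)/q^2 + l0*((-(1-g0))/q0 - (-1)/q))) (at z)"
    unfolding Bf_def q_def q0_def
    apply (rule DERIV_cong)
     apply (rule derivative_intros | (use qq in simp; fail))+
    by (simp add: power2_eq_square algebra_simps add_divide_distrib diff_divide_distrib)
  moreover have "a*b/q^2 + sig*((1-2*z)*q + (1-z)*z)/q^2 + l0*((-(1-g0))/q0 - (-1)/q) \<ge> 0"
  proof -
    have e1: "(-(1-g0))/q0 - (-1)/q = g0*b/(q*q0)"
    proof -
      have "q0 - (1-g0)*q = g0*b" by (simp add: q_def q0_def algebra_simps)
      then show ?thesis using q q0p by (simp add: field_simps)
    qed
    have e2: "g0*b/(q*q0) \<ge> g0*b/(q*q)"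
      using q q0 q0p g0 b by (intro divide_left_mono mult_left_mono mult_pos_pos mult_nonneg_nonneg) auto
    have e3: "a*b + sig*((1-2*z)*q + (1-z)*z) + l0*g0*b = sig*((1-z)*(1-z) + 2*(1-z)*b)"
      by (simp add: a q_def algebra_simps)
    have "a*b/q^2 + sig*((1-2*z)*q + (1-z)*z)/q^2 + l0*(g0*b/(q*q)) = (a*b + sig*((1-2*z)*q + (1-z)*z) + l0*g0*b)/(q*q)"
      by (simp add: power2_eq_square add_divide_distrib)
    also have "\<dots> = sig*((1-z)*(1-z) + 2*(1-z)*b)/(q*q)" by (simp only: e3)
    also have "\<dots> \<ge> 0" using sig z xy b q by (intro divide_nonneg_pos mult_nonneg_nonneg add_nonneg_nonneg mult_pos_pos) auto
    finally have f: "a*b/q^2 + sig*((1-2*z)*q + (1-z)*z)/q^2 + l0*(g0*b/(q*q)) \<ge> 0" .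
    moreover have "l0*((-(1-g0))/q0 - (-1)/q) \<ge> l0*(g0*b/(q*q))"
      unfolding e1 using e2 l0 by (intro mult_left_mono) auto
    ultimately show ?thesis by linarith
  qed
  ultimately show "\<exists>y. (Bf has_real_derivative y) (at z) \<and> 0 \<le> y" by blast
qed

lemma A_mono:
  fixes l1 g1 b x y :: real
  assumes b: "b > 0" and l1: "l1 \<ge> 0" and g1: "0 < g1" "g1 \<le> 1"
    and xy: "0 \<le> x" "x \<le> y" "y \<le> 1"
  defines "Af \<equiv> \<lambda>x. l1*g1*ln (1-x+b) + l1*(ln (1-(x-g1*x)+b) - ln (1-x+b))"
  shows "Af x \<le> Af y"
proof (rule DERIV_nonneg_imp_nondecreasing[OF xy(2)])
  fix z assume z: "x \<le> z" "z \<le> y"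
  define q where "q = 1 - z + b"
  define q1 where "q1 = 1-(z-g1*z)+b"
  have q: "q > 0" using z xy b by (auto simp: q_def)
  have "q1 - q = g1*z" by (simp add: q_def q1_def algebra_simps)
  moreover have "g1*z \<ge> 0" using g1 z xy by (intro mult_nonneg_nonneg) auto
  ultimately have q1: "q1 \<ge> q" by linarith
  have qq: "1 - z + b > 0" "1-(z-g1*z)+b > 0" using q q1 by (simp_all add: q_def q1_def)
  have "(Af has_real_derivative (l1*g1*((-1)/q) + l1*((-(1-g1))/q1 - (-1)/q))) (at z)"
    unfolding Af_def q_def q1_def
    apply (rule DERIV_cong)
     apply (rule derivative_intros | (use qq in simp; fail))+
    done
  moreover have "l1*g1*((-1)/q) + l1*((-(1-g1))/q1 - (-1)/q) \<ge> 0"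
  proof -
    have "l1*g1*((-1)/q) + l1*((-(1-g1))/q1 - (-1)/q) = (l1*(1-g1))*(1/q - 1/q1)"
      using q q1 by (simp add: field_simps)
    moreover have "1/q - 1/q1 \<ge> 0" using q q1 by (simp add: frac_le)
    moreover have "l1*(1-g1) \<ge> 0" using l1 g1 by simp
    ultimately show ?thesis by simp
  qed
  ultimately show "\<exists>y. (Af has_real_derivative y) (at z) \<and> 0 \<le> y" by blast
qed



lemma V_dx:
  fixes a c t x :: real
  assumes "1 - x + exp (-a*t) > 0"
  shows "((\<lambda>y. -2*exp(-c*t)*ln(1-y+exp(-a*t))) has_real_derivative 2*exp(-c*t)/(1-x+exp(-a*t))) (at x)"
  apply (rule DERIV_cong)
   apply (rule derivative_intros | (use assms in simp; fail))+
  done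

lemma V_dt:
  fixes a c t x :: real
  assumes "1 - x + exp (-a*t) > 0"
  shows "((\<lambda>s. -2*exp(-c* s)*ln(1-x+exp(-a* s))) has_real_derivative
     (2*c*exp(-c*t)*ln(1-x+exp(-a*t)) + 2*a*exp(-a*t)*exp(-c*t)/(1-x+exp(-a*t)))) (at t)"
  apply (rule DERIV_cong)
   apply (rule derivative_intros | (use assms in simp; fail))+
  done

lemma init_mono:
  fixes x y :: real
  assumes "0 \<le> x" "x \<le> y" "y \<le> 1"
  shows "y + 2*ln(1-y+1) \<le> x + 2*ln(1-x+1)"
proof -
  have "(\<lambda>z. -(z + 2*ln(1-z+1))) x \<le> (\<lambda>z. -(z + 2*ln(1-z+1))) y"
  proof (rule DERIV_nonneg_imp_nondecreasing[OF assms(2)])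
    fix z assume z: "x \<le> z" "z \<le> y"
    have q: "1 - z + 1 > 0" using z assms by auto
    have "((\<lambda>z. -(z + 2*ln(1-z+1))) has_real_derivative -(1 + 2*((-1)/(1-z+1)))) (at z)"
      apply (rule DERIV_cong)
       apply (rule derivative_intros | (use q in simp; fail))+
      done
    moreover have "-(1 + 2*((-1)/(1-z+1))) \<ge> 0"
    proof -
      have "1 - z + 1 \<le> 2" using z assms by auto
      then have "1 \<le> 2/(1-z+1)" using q by (simp add: le_divide_eq)
      then show ?thesis by simp
    qed
    ultimately show "\<exists>d. ((\<lambda>z. -(z + 2*ln(1-z+1))) has_real_derivative d) (at z) \<and> 0 \<le> d" by blast
  qed
  then show ?thesis by simp
qed

lemma deriv_nonpos_antimono:
  fixes f :: "real \<Rightarrow> real"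
  assumes d: "(f has_real_derivative D) (at x within {0..1})" and x: "0 \<le> x" "x \<le> 1"
    and m: "\<And>y z. 0 \<le> y \<Longrightarrow> y \<le> z \<Longrightarrow> z \<le> 1 \<Longrightarrow> f z \<le> f y"
  shows "D \<le> 0"
proof (rule ccontr)
  assume "\<not> D \<le> 0"
  then have D: "D > 0" by simp
  show False
  proof (cases "x < 1")
    case True
    obtain d where d0: "d > 0" and dd: "\<And>h. h > 0 \<Longrightarrow> x + h \<in> {0..1} \<Longrightarrow> h < d \<Longrightarrow> f x < f (x + h)"
      using has_real_derivative_pos_inc_right[OF d D] by blast
    define h where "h = min (d/2) (1 - x)"
    have h: "h > 0" "h < d" "x + h \<in> {0..1}" using d0 True x by (auto simp: h_def)
    have "f x < f (x + h)" using dd h by blast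
    moreover have "f (x + h) \<le> f x" using m[of x "x+h"] h x by auto
    ultimately show False by simp
  next
    case False
    then have x1: "x = 1" using x by simp
    obtain d where d0: "d > 0" and dd: "\<And>h. h > 0 \<Longrightarrow> x - h \<in> {0..1} \<Longrightarrow> h < d \<Longrightarrow> f (x - h) < f x"
      using has_real_derivative_pos_inc_left[OF d D] by blast
    define h where "h = min (d/2) 1"
    have h: "h > 0" "h < d" "x - h \<in> {0..1}" using d0 x1 by (auto simp: h_def)
    have "f (x - h) < f x" using dd h by blast
    moreover have "f x \<le> f (x - h)" using m[of "x-h" x] h x by auto
    ultimately show False by simp
  qed
qed



lemma J0_props:
  fixes X Y g :: real
  assumes "0 \<le> X" "X \<le> Y" "Y \<le> 1" "0 < g" "g \<le> 1"
  shows "0 \<le> X+g*(1-X)" "X+g*(1-X) \<le> Y+g*(1-Y)" "Y+g*(1-Y) \<le> 1"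
proof -
  show "0 \<le> X+g*(1-X)" using assms by (intro add_nonneg_nonneg mult_nonneg_nonneg) auto
  have "Y+g*(1-Y) - (X+g*(1-X)) = (1-g)*(Y-X)" by (simp add: algebra_simps)
  moreover have "(1-g)*(Y-X) \<ge> 0" using assms by (intro mult_nonneg_nonneg) auto
  ultimately show "X+g*(1-X) \<le> Y+g*(1-Y)" by linarith
  have "1 - (Y+g*(1-Y)) = (1-g)*(1-Y)" by (simp add: algebra_simps)
  moreover have "(1-g)*(1-Y) \<ge> 0" using assms by (intro mult_nonneg_nonneg) auto
  ultimately show "Y+g*(1-Y) \<le> 1" by linarith
qed

lemma J1_props:
  fixes X Y g :: real
  assumes "0 \<le> X" "X \<le> Y" "Y \<le> 1" "0 < g" "g \<le> 1"
  shows "0 \<le> X-g*X" "X-g*X \<le> Y-g*Y" "Y-g*Y \<le> 1"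
proof -
  have "X-g*X = (1-g)*X" by (simp add: algebra_simps)
  moreover have "(1-g)*X \<ge> 0" using assms by (intro mult_nonneg_nonneg) auto
  ultimately show "0 \<le> X-g*X" by linarith
  have "Y-g*Y - (X-g*X) = (1-g)*(Y-X)" by (simp add: algebra_simps)
  moreover have "(1-g)*(Y-X) \<ge> 0" using assms by (intro mult_nonneg_nonneg) auto
  ultimately show "X-g*X \<le> Y-g*Y" by linarith
  have "Y-g*Y = (1-g)*Y" by (simp add: algebra_simps)
  moreover have "(1-g)*Y \<le> 1*1" using assms by (intro mult_mono) auto
  ultimately show "Y-g*Y \<le> 1" by linarith
qed

lemma comparison:
  fixes W Wx Wt G :: "real \<Rightarrow> real \<Rightarrow> real" and sig l0 l1 g0 g1 :: real
  assumes dx: "\<forall>x\<in>{0..1}. \<forall>t\<in>{0..}. ((\<lambda>y. W y t) has_real_derivative Wx x t) (at x within {0..1})"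
    and dt: "\<forall>x\<in>{0..1}. \<forall>t\<in>{0..}. ((\<lambda>s. W x s) has_real_derivative Wt x t) (at t within {0..})"
    and cx: "continuous_on ({0..1} \<times> {0..}) (\<lambda>(x,t). Wx x t)"
    and pde: "\<forall>x\<in>{0..1}. \<forall>t>0. Wt x t + sig*(1-x)*x*Wx x t =
                 l0*(W (x+g0*(1-x)) t - W x t) + l1*(W (x-g1*x) t - W x t) - G x t"
    and Gmono: "\<And>x y t. 0 \<le> x \<Longrightarrow> x \<le> y \<Longrightarrow> y \<le> 1 \<Longrightarrow> t > 0 \<Longrightarrow> G x t \<le> G y t"
    and init: "\<And>x y. 0 \<le> x \<Longrightarrow> x \<le> y \<Longrightarrow> y \<le> 1 \<Longrightarrow> W y 0 \<le> W x 0"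
    and l0: "l0 \<ge> 0" and l1: "l1 \<ge> 0" and g0: "0 < g0" "g0 \<le> 1" and g1: "0 < g1" "g1 \<le> 1"
    and xy: "0 \<le> x" "x \<le> y" "y \<le> 1" and t: "t \<ge> 0"
  shows "W y t \<le> W x t"
proof -
  define T where "T = t + 1"
  have T: "T > 0" "t \<le> T" using t by (auto simp: T_def)
  define Sd where "Sd = {W y s - W x s | x y s. 0 \<le> x \<and> x \<le> y \<and> y \<le> 1 \<and> 0 \<le> s \<and> s \<le> T}"
  have "compact ((\<lambda>p. W (snd p) (fst p)) ` ({0..T} \<times> {0..1}))"
    apply (rule compact_continuous_image)
     apply (rule continuous_on_subset[OF joint_cont[OF dx dt cx]])
    by (auto intro: compact_Times)
  then obtain B where B: "\<And>z. z \<in> (\<lambda>p. W (snd p) (fst p)) ` ({0..T} \<times> {0..1}) \<Longrightarrow> norm z \<le> B"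
    using compact_imp_bounded[of "(\<lambda>p. W (snd p) (fst p)) ` ({0..T} \<times> {0..1})"] unfolding bounded_iff by blast
  have Bb: "\<bar>W x s\<bar> \<le> B" if "0 \<le> x" "x \<le> 1" "0 \<le> s" "s \<le> T" for x s
  proof -
    have "W x s \<in> (\<lambda>p. W (snd p) (fst p)) ` ({0..T} \<times> {0..1})"
      using that by (intro image_eqI[of _ _ "(s,x)"]) auto
    then have "norm (W x s) \<le> B" by (rule B)
    then show ?thesis by simp
  qed
  have bdd: "bdd_above Sd"
  proof -
    have "z \<le> 2*B" if "z \<in> Sd" for z
    proof -
      obtain x y s where "z = W y s - W x s" "0 \<le> x" "x \<le> y" "y \<le> 1" "0 \<le> s" "s \<le> T"
        using \<open>z \<in> Sd\<close> unfolding Sd_def by blast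
      then show ?thesis using Bb[of x s] Bb[of y s] by linarith
    qed
    then show ?thesis unfolding bdd_above_def by blast
  qed
  have mem: "W y s - W x s \<in> Sd" if "0 \<le> x" "x \<le> y" "y \<le> 1" "0 \<le> s" "s \<le> T" for x y s
    unfolding Sd_def using that by blast
  have ne: "Sd \<noteq> {}" using mem[of 0 0 0] T by auto
  define K where "K = Sup Sd"
  define Kp where "Kp = max K 0"
  define L where "L = l0 + l1"
  have L: "L \<ge> 0" using l0 l1 by (simp add: L_def)
  have Kup: "W y s - W x s \<le> K" if "0 \<le> x" "x \<le> y" "y \<le> 1" "0 \<le> s" "s \<le> T" for x y s
    unfolding K_def by (rule cSup_upper[OF mem[OF that] bdd])
  have C: "W y s - W x s \<le> Kp * (1 - exp (-L*T))" if xy: "0 \<le> x" "x \<le> y" "y \<le> 1" and s: "0 \<le> s" "s \<le> T" for x y s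
  proof -
    define a where "a = psi sig s x"
    define b where "b = psi sig s y"
    have ab: "0 \<le> a" "a \<le> b" "b \<le> 1"
      using psi_range[of x sig s] psi_range[of y sig s] psi_mono[of x y sig s] xy by (auto simp: a_def b_def)
    define E where "E = (\<lambda>r. W (phi sig r b) r - W (phi sig r a) r)"
    define h where "h = (\<lambda>r. exp (L*r) * (E r - Kp))"
    have pr: "\<And>r z. 0 \<le> z \<Longrightarrow> z \<le> 1 \<Longrightarrow> phi sig r z \<in> {0..1}" using phi_range by auto
    have dW: "((\<lambda>r. W (phi sig r z) r) has_real_derivative
               (Wx (phi sig r z) r * (sig * (1 - phi sig r z) * phi sig r z) + Wt (phi sig r z) r)) (at r within {0..})"
      if "0 \<le> z" "z \<le> 1" "r \<ge> 0" for z r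
      apply (rule chain_rule_curve[OF dx dt cx])
      subgoal by (rule has_field_derivative_at_within[OF phi_deriv[OF that(1,2)]])
      subgoal using pr that by auto
      subgoal using that by auto
      done
    define E' where "E' = (\<lambda>r. (Wx (phi sig r b) r * (sig * (1 - phi sig r b) * phi sig r b) + Wt (phi sig r b) r)
                           - (Wx (phi sig r a) r * (sig * (1 - phi sig r a) * phi sig r a) + Wt (phi sig r a) r))"
    have dE: "(E has_real_derivative E' r) (at r within {0..})" if "r \<ge> 0" for r
      unfolding E_def E'_def using ab that by (intro DERIV_diff dW) auto
    have dh: "(h has_real_derivative exp (L*r) * (L*(E r - Kp) + E' r)) (at r within {0..})" if "r \<ge> 0" for r
    proof -
      have e1: "((\<lambda>r. exp (L*r)) has_real_derivative exp (L*r) * L) (at r within {0..})"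
        using DERIV_fun_exp[OF DERIV_cmult_Id[of L r UNIV]] has_field_derivative_at_within by blast
      have e2: "((\<lambda>r. E r - Kp) has_real_derivative E' r) (at r within {0..})"
        using DERIV_diff[OF dE[OF that] DERIV_const[of Kp]] by simp
      show ?thesis unfolding h_def
        by (rule DERIV_cong[OF DERIV_mult'[OF e1 e2]]) (simp add: algebra_simps)
    qed
    have E'le: "E' r \<le> L * (K - E r)" if "0 < r" "r \<le> T" for r
    proof -
      define X where "X = phi sig r a"
      define Y where "Y = phi sig r b"
      have XY: "0 \<le> X" "X \<le> Y" "Y \<le> 1"
        using phi_range[of a sig r] phi_range[of b sig r] phi_mono[of a b sig r] ab by (auto simp: X_def Y_def)
      have eq: "E' r = l0*((W (Y+g0*(1-Y)) r - W (X+g0*(1-X)) r) - E r) + l1*((W (Y-g1*Y) r - W (X-g1*X) r) - E r) - (G Y r - G X r)"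
      proof -
        have tX: "Wt X r = l0*(W (X+g0*(1-X)) r - W X r) + l1*(W (X-g1*X) r - W X r) - G X r - sig*(1-X)*X*Wx X r"
        proof -
          have "X \<in> {0..1}" using XY by auto
          from pde[rule_format, OF this that(1)] show ?thesis by linarith
        qed
        have tY: "Wt Y r = l0*(W (Y+g0*(1-Y)) r - W Y r) + l1*(W (Y-g1*Y) r - W Y r) - G Y r - sig*(1-Y)*Y*Wx Y r"
        proof -
          have "Y \<in> {0..1}" using XY by auto
          from pde[rule_format, OF this that(1)] show ?thesis by linarith
        qed
        show ?thesis
          unfolding E'_def E_def X_def[symmetric] Y_def[symmetric] tX tY
          using mult.commute[of "Wx Y r" "sig*(1-Y)*Y"] mult.commute[of "Wx X r" "sig*(1-X)*X"]
          by (simp only: right_diff_distrib)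
      qed
      have k0: "W (Y+g0*(1-Y)) r - W (X+g0*(1-X)) r \<le> K"
        by (rule Kup) (use J0_props[OF XY g0] that in auto)
      have k1: "W (Y-g1*Y) r - W (X-g1*X) r \<le> K"
        by (rule Kup) (use J1_props[OF XY g1] that in auto)
      have gg: "G X r \<le> G Y r" using Gmono XY that by auto
      have "E' r \<le> l0*(K - E r) + l1*(K - E r)"
      proof -
        have "l0*((W (Y+g0*(1-Y)) r - W (X+g0*(1-X)) r) - E r) \<le> l0*(K - E r)"
          using k0 l0 by (intro mult_left_mono) auto
        moreover have "l1*((W (Y-g1*Y) r - W (X-g1*X) r) - E r) \<le> l1*(K - E r)"
          using k1 l1 by (intro mult_left_mono) auto
        ultimately show ?thesis unfolding eq using gg by linarith
      qed
      then show ?thesis by (simp add: L_def algebra_simps)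
    qed
    have hs: "h s \<le> h 0"
    proof (rule DERIV_nonpos_imp_decreasing_open[OF s(1)])
      fix r assume r: "0 < r" "r < s"
      have "(h has_real_derivative exp (L*r) * (L*(E r - Kp) + E' r)) (at r within {0<..})"
        using dh[of r] r by (auto intro: DERIV_subset)
      then have "(h has_real_derivative exp (L*r) * (L*(E r - Kp) + E' r)) (at r)"
        using r at_within_open[of r "{0<..}"] by auto
      moreover have "exp (L*r) * (L*(E r - Kp) + E' r) \<le> 0"
      proof -
        have "L*(E r - Kp) + E' r \<le> L*(E r - Kp) + L*(K - E r)" using E'le[of r] r s by auto
        also have "\<dots> = L*(K - Kp)" by (simp add: algebra_simps)
        also have "\<dots> \<le> 0" using L by (simp add: Kp_def mult_nonneg_nonpos)
        finally show ?thesis by (simp add: mult_nonneg_nonpos)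
      qed
      ultimately show "\<exists>y. (h has_real_derivative y) (at r) \<and> y \<le> 0" by blast
    next
      show "continuous_on {0..s} h"
      proof -
        have "continuous (at r within {0..}) h" if "r \<in> {0..s}" for r
          using dh[of r] that DERIV_continuous by auto
        then have "continuous (at r within {0..s}) h" if "r \<in> {0..s}" for r
          using that continuous_within_subset[of r "{0..}" h "{0..s}"] by auto
        then show ?thesis using continuous_on_eq_continuous_within by blast
      qed
    qed
    have E0: "E 0 \<le> 0" using init[OF ab] by (simp add: E_def phi_0)
    have Es: "E s = W y s - W x s"
      using phi_psi[of x sig s] phi_psi[of y sig s] xy by (simp add: E_def a_def b_def)
    have h0: "h 0 = E 0 - Kp" by (simp add: h_def)
    have "h s = exp (L * s) * (W y s - W x s - Kp)" by (simp add: h_def Es)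
    then have "exp (L * s) * (W y s - W x s - Kp) \<le> -Kp"
      using hs h0 E0 by linarith
    then have "exp (-L * s) * (exp (L * s) * (W y s - W x s - Kp)) \<le> exp (-L * s) * (-Kp)"
      by (intro mult_left_mono) auto
    moreover have "exp (-L * s) * exp (L * s) = 1" by (simp add: exp_minus field_simps)
    ultimately have "W y s - W x s - Kp \<le> - (exp (-L * s) * Kp)"
      by (simp add: mult.assoc[symmetric])
    then have w1: "W y s - W x s - Kp \<le> - Kp * exp (-L * s)"
      by (simp add: mult.commute)
    have "exp (-L*T) \<le> exp (-L * s)" using s L by (simp add: mult_left_mono)
    moreover have "Kp \<ge> 0" by (simp add: Kp_def)
    ultimately have w2: "Kp * exp (-L*T) \<le> Kp * exp (-L * s)"
      by (intro mult_left_mono)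
    from w1 w2 have "W y s - W x s \<le> Kp - Kp * exp (-L*T)"
      by linarith
    then show ?thesis by (simp add: algebra_simps)
  qed
  have "K \<le> Kp * (1 - exp (-L*T))"
    unfolding K_def
  proof (rule cSup_least[OF ne])
    fix z assume "z \<in> Sd"
    then obtain x y s where "z = W y s - W x s" "0 \<le> x" "x \<le> y" "y \<le> 1" "0 \<le> s" "s \<le> T"
      unfolding Sd_def by blast
    then show "z \<le> Kp * (1 - exp (-L*T))" using C by blast
  qed
  then have "K \<le> 0"
  proof (cases "K \<le> 0")
    case False
    then have Kpos: "K > 0" by simp
    assume "K \<le> Kp * (1 - exp (-L*T))"
    then have "K * exp (-L*T) \<le> 0" using Kpos by (simp add: Kp_def algebra_simps)
    moreover have "K * exp (-L*T) > 0" using Kpos by simp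
    ultimately show ?thesis by linarith
  qed simp
  then show ?thesis using Kup[OF xy t T(2)] by simp
qed


lemma Geq_alg:
  fixes c E Lq a b q sig z l0 l1 L0 L1 :: real
  assumes "q \<noteq> 0"
  shows "2*c*E*Lq + 2*a*b*E/q + sig*(1-z)*z*(2*E/q) - l0*(-2*E*L0 - -2*E*Lq) - l1*(-2*E*L1 - -2*E*Lq)
       = 2*E*((c*Lq + l1*(L1 - Lq)) + (a*b/q + sig*(1-z)*z/q + l0*(L0 - Lq)))"
  using assms by (simp add: field_simps)

theorem lemma4p5:
  fixes f0 f1 lam0 lam1 gam0 gam1 :: real
    and u ux ut :: "real \<Rightarrow> real \<Rightarrow> real"
  assumes "f0 > 0" and "f1 \<ge> 0" and "f0 - f1 > 0"
    and "lam0 \<ge> 0" and "lam1 \<ge> 0"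
    and "gam0 \<in> {0<..1}" and "gam1 \<in> {0<..1}"
    and "is_solution f0 f1 lam0 lam1 gam0 gam1 u ux ut"
    and "f0 - f1 \<ge> (lam0 * gam0) * f0 + (lam1 * gam1) * f1"
  shows "\<forall>x\<in>{0..1}. \<forall>t\<ge>0.
           ux x t \<le> 2 / (1 - x + exp (- ((f0 - f1) - (lam0 * gam0) * f0) * t))
                     * exp (- ((lam1 * gam1) * f1) * t)"
proof (intro ballI allI impI)
  fix x0 t0 :: real assume x0: "x0 \<in> {0..1}" and t0: "t0 \<ge> 0"
  have g0: "0 < gam0" "gam0 \<le> 1" and g1: "0 < gam1" "gam1 \<le> 1" using assms(6,7) by auto
  define sig where "sig = f0 - f1"
  define l0 where "l0 = lam0*f0"
  define l1 where "l1 = lam1*f1"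
  define a where "a = (f0 - f1) - (lam0 * gam0) * f0"
  define c where "c = (lam1 * gam1) * f1"
  have sig: "sig \<ge> 0" using assms(3) by (simp add: sig_def)
  have l0: "l0 \<ge> 0" using assms(1,4) by (simp add: l0_def)
  have l1: "l1 \<ge> 0" using assms(2,5) by (simp add: l1_def)
  have a_eq: "a = sig - l0 * gam0" by (simp add: a_def sig_def l0_def algebra_simps)
  have c_eq: "c = l1 * gam1" by (simp add: c_def l1_def algebra_simps)
  define V where "V = (\<lambda>x t. -2*exp(-c*t)*ln(1-x+exp(-a*t)))"
  define v where "v = (\<lambda>x t. 2*exp(-c*t)/(1-x+exp(-a*t)))"
  define Vt where "Vt = (\<lambda>x t. 2*c*exp(-c*t)*ln(1-x+exp(-a*t)) + 2*a*exp(-a*t)*exp(-c*t)/(1-x+exp(-a*t)))"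
  define G where "G = (\<lambda>x t. Vt x t + sig*(1-x)*x* v x t - l0*(V (x+gam0*(1-x)) t - V x t) - l1*(V (x-gam1*x) t - V x t))"
  define W where "W = (\<lambda>x t. u x t - V x t)"
  define Wx where "Wx = (\<lambda>x t. ux x t - v x t)"
  define Wt where "Wt = (\<lambda>x t. ut x t - Vt x t)"
  note sol = assms(8)[unfolded is_solution_def]
  have udx: "\<forall>x\<in>{0..1}. \<forall>t\<in>{0..}. ((\<lambda>y. u y t) has_real_derivative ux x t) (at x within {0..1})"
    using sol by blast
  have udt: "\<forall>x\<in>{0..1}. \<forall>t\<in>{0..}. ((\<lambda>s. u x s) has_real_derivative ut x t) (at t within {0..})"
    using sol by blast
  have uxc: "continuous_on ({0..1} \<times> {0..}) (\<lambda>(x,t). ux x t)" using sol by blast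
  have upde: "\<forall>x\<in>{0..1}. \<forall>t>0. ut x t + (f0 - f1) * (1 - x) * x * ux x t =
          lam0 * f0 * (u (x + gam0 * (1 - x)) t - u x t)
        + lam1 * f1 * (u (x - gam1 * x) t - u x t)" using sol by blast
  have u0: "\<forall>x\<in>{0..1}. u x 0 = x" using sol by blast
  have qpos: "1 - x + exp(-a*t) > 0" if "x \<le> 1" for x t
    using exp_gt_zero[of "-a*t"] that by linarith
  have Vdx1: "((\<lambda>y. V y t) has_real_derivative v x t) (at x)" if "x \<le> 1" for x t
    unfolding V_def v_def by (rule V_dx) (rule qpos[OF that])
  have Vdt1: "((\<lambda>s. V x s) has_real_derivative Vt x t) (at t)" if "x \<le> 1" for x t
    unfolding V_def Vt_def by (rule V_dt) (rule qpos[OF that])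
  have nz: "\<forall>p\<in>{0..1} \<times> {0..}. 1 - fst p + exp(-a* snd p) \<noteq> 0"
  proof
    fix p :: "real \<times> real" assume "p \<in> {0..1} \<times> {0..}"
    then have "fst p \<le> 1" by auto
    then show "1 - fst p + exp(-a* snd p) \<noteq> 0" using qpos[of "fst p" "snd p"] by linarith
  qed
  have vc0: "continuous_on ({0..1} \<times> {0..}) (\<lambda>p. 2*exp(-c* snd p)/(1 - fst p + exp(-a* snd p)))"
    using nz by (intro continuous_intros) auto
  have vc: "continuous_on ({0..1} \<times> {0..}) (\<lambda>(x,t). v x t)"
  proof -
    have "(\<lambda>(x,t). v x t) = (\<lambda>p. 2*exp(-c* snd p)/(1 - fst p + exp(-a* snd p)))"
      by (rule ext) (simp add: v_def case_prod_beta)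
    then show ?thesis using vc0 by simp
  qed
  have Wdx: "\<forall>x\<in>{0..1}. \<forall>t\<in>{0..}. ((\<lambda>y. W y t) has_real_derivative Wx x t) (at x within {0..1})"
  proof (intro ballI)
    fix x t :: real assume x: "x \<in> {0..1}" and t: "t \<in> {0..}"
    have "((\<lambda>y. V y t) has_real_derivative v x t) (at x within {0..1})"
      using has_field_derivative_at_within[OF Vdx1] x by auto
    from DERIV_diff[OF udx[rule_format, OF x t] this]
    show "((\<lambda>y. W y t) has_real_derivative Wx x t) (at x within {0..1})"
      by (simp add: W_def Wx_def)
  qed
  have Wdt: "\<forall>x\<in>{0..1}. \<forall>t\<in>{0..}. ((\<lambda>s. W x s) has_real_derivative Wt x t) (at t within {0..})"
  proof (intro ballI)
    fix x t :: real assume x: "x \<in> {0..1}" and t: "t \<in> {0..}"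
    have "((\<lambda>s. V x s) has_real_derivative Vt x t) (at t within {0..})"
      using has_field_derivative_at_within[OF Vdt1] x by auto
    from DERIV_diff[OF udt[rule_format, OF x t] this]
    show "((\<lambda>s. W x s) has_real_derivative Wt x t) (at t within {0..})"
      by (simp add: W_def Wt_def)
  qed
  have Wxc: "continuous_on ({0..1} \<times> {0..}) (\<lambda>(x,t). Wx x t)"
  proof -
    have "(\<lambda>(x,t). Wx x t) = (\<lambda>p. (\<lambda>(x,t). ux x t) p - (\<lambda>(x,t). v x t) p)"
      by (rule ext) (simp add: Wx_def case_prod_beta)
    then show ?thesis using continuous_on_diff[OF uxc vc] by simp
  qed
  have Wpde: "\<forall>x\<in>{0..1}. \<forall>t>0. Wt x t + sig*(1-x)*x*Wx x t =
                 l0*(W (x+gam0*(1-x)) t - W x t) + l1*(W (x-gam1*x) t - W x t) - G x t"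
  proof (intro ballI allI impI)
    fix x t :: real assume x: "x \<in> {0..1}" and t: "t > 0"
    have p: "ut x t + sig * (1 - x) * x * ux x t =
          l0 * (u (x + gam0 * (1 - x)) t - u x t) + l1 * (u (x - gam1 * x) t - u x t)"
      using upde[rule_format, OF x t] by (simp add: sig_def l0_def l1_def)
    have e1: "Wt x t + sig*(1-x)*x*Wx x t = (ut x t + sig*(1-x)*x*ux x t) - (Vt x t + sig*(1-x)*x* v x t)"
      by (simp add: Wt_def Wx_def algebra_simps)
    have e2: "l0*(W (x+gam0*(1-x)) t - W x t) = l0*(u (x+gam0*(1-x)) t - u x t) - l0*(V (x+gam0*(1-x)) t - V x t)"
      by (simp add: W_def algebra_simps)
    have e3: "l1*(W (x-gam1*x) t - W x t) = l1*(u (x-gam1*x) t - u x t) - l1*(V (x-gam1*x) t - V x t)"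
      by (simp add: W_def algebra_simps)
    have e4: "G x t = Vt x t + sig*(1-x)*x* v x t - l0*(V (x+gam0*(1-x)) t - V x t) - l1*(V (x-gam1*x) t - V x t)"
      by (simp add: G_def)
    show "Wt x t + sig*(1-x)*x*Wx x t = l0*(W (x+gam0*(1-x)) t - W x t) + l1*(W (x-gam1*x) t - W x t) - G x t"
      using p e1 e2 e3 e4 by linarith
  qed
  have Geq: "G z t = 2*exp(-c*t)*((l1*gam1*ln(1-z+exp(-a*t)) + l1*(ln(1-(z-gam1*z)+exp(-a*t)) - ln(1-z+exp(-a*t))))
        + (a*exp(-a*t)/(1-z+exp(-a*t)) + sig*(1-z)*z/(1-z+exp(-a*t)) + l0*(ln(1-(z+gam0*(1-z))+exp(-a*t)) - ln(1-z+exp(-a*t)))))"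
    if "z \<le> 1" for z t
  proof -
    have q: "1 - z + exp(-a*t) \<noteq> 0" using qpos[of z t] that by linarith
    show ?thesis unfolding G_def Vt_def v_def V_def c_eq[symmetric]
      by (rule Geq_alg[OF q])
  qed
  have Gmono: "G x t \<le> G y t" if "0 \<le> x" "x \<le> y" "y \<le> 1" "t > 0" for x y t
  proof -
    have b: "exp(-a*t) > 0" by simp
    have A: "l1*gam1*ln(1-x+exp(-a*t)) + l1*(ln(1-(x-gam1*x)+exp(-a*t)) - ln(1-x+exp(-a*t)))
          \<le> l1*gam1*ln(1-y+exp(-a*t)) + l1*(ln(1-(y-gam1*y)+exp(-a*t)) - ln(1-y+exp(-a*t)))"
      using A_mono[OF b l1 g1 that(1,2,3)] by simp
    have B: "a*exp(-a*t)/(1-x+exp(-a*t)) + sig*(1-x)*x/(1-x+exp(-a*t)) + l0*(ln(1-(x+gam0*(1-x))+exp(-a*t)) - ln(1-x+exp(-a*t)))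
          \<le> a*exp(-a*t)/(1-y+exp(-a*t)) + sig*(1-y)*y/(1-y+exp(-a*t)) + l0*(ln(1-(y+gam0*(1-y))+exp(-a*t)) - ln(1-y+exp(-a*t)))"
      using B_mono[OF b sig l0 g0 a_eq that(1,2,3)] by simp
    have "2*exp(-c*t) \<ge> 0" by simp
    moreover have ex: "x \<le> 1" using that by linarith
    ultimately show ?thesis unfolding Geq[OF ex, of t] Geq[OF that(3), of t]
      by (intro mult_left_mono add_mono A B)
  qed
  have init: "W y 0 \<le> W x 0" if "0 \<le> x" "x \<le> y" "y \<le> 1" for x y
  proof -
    have "W z 0 = z + 2*ln(1-z+1)" if "0 \<le> z" "z \<le> 1" for z
      using u0 that by (simp add: W_def V_def)
    then show ?thesis using init_mono[OF that] that by simp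
  qed
  have mono: "W z t0 \<le> W y t0" if "0 \<le> y" "y \<le> z" "z \<le> 1" for y z
    by (rule comparison[OF Wdx Wdt Wxc Wpde Gmono init l0 l1 g0 g1 that t0])
  have "Wx x0 t0 \<le> 0"
    by (rule deriv_nonpos_antimono[OF Wdx[rule_format, OF x0] _ _ mono]) (use x0 t0 in auto)
  then have "ux x0 t0 \<le> v x0 t0" by (simp add: Wx_def)
  then show "ux x0 t0 \<le> 2 / (1 - x0 + exp (- ((f0 - f1) - (lam0 * gam0) * f0) * t0))
                     * exp (- ((lam1 * gam1) * f1) * t0)"
    by (simp add: v_def a_def c_def)
qed

end
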